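(* Let $I,S$ be numerical semigroups such that $I$ is irreducible, $S\subseteq I$ and $\mathrm{F}(S)=\mathrm{F}(I)$. Then $S=I\setminus A$ for some $A\subseteq\{x\in I\mid \frac{\mathrm{F}(I)}{2}<x<\mathrm{F}(I)\}$ if and only if $\Delta(S)=\Delta(I)$.
   Context: A numerical semigroup is a subset $S\subseteq\mathbb{N}$ closed under addition with $0\in S$ and $\mathbb{N}\setminus S$ finite; $\mathrm{F}(S)=\max(\mathbb{Z}\setminus S)$. A numerical semigroup is irreducible if it is not the intersection of two numerical semigroups properly containing it. $\Delta(S)=\{s\in S\mid s<\frac{\mathrm{F}(S)}{2}\}$. *)

theory Defs
  imports Main
begin

definition numerical_semigroup :: "nat set \<Rightarrow> bool" where
  "numerical_semigroup S \<longleftrightarrow> 0 \<in> S \<and> (\<forall>x\<in>S. \<forall>y\<in>S. x + y \<in> S) \<and> finite (UNIV - S)"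

text \<open>Frobenius number F(S) = max (Z \ S); negative integers are never in S, so
  F(N) = -1, otherwise it is the largest gap.\<close>
definition frobenius :: "nat set \<Rightarrow> int" where
  "frobenius S = (if S = UNIV then -1 else int (Max (UNIV - S)))"

definition irreducible_ns :: "nat set \<Rightarrow> bool" where
  "irreducible_ns S \<longleftrightarrow> numerical_semigroup S \<and>
     \<not> (\<exists>S1 S2. numerical_semigroup S1 \<and> numerical_semigroup S2 \<and>
                S \<subset> S1 \<and> S \<subset> S2 \<and> S = S1 \<inter> S2)"

definition Delta :: "nat set \<Rightarrow> nat set" where
  "Delta S = {s \<in> S. 2 * int s < frobenius S}"

end

theory Submission
  imports Defs
begin

lemma gap_le:
  assumes "numerical_semigroup S" "x \<notin> S"
  shows "S \<noteq> UNIV" "int x \<le> frobenius S"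
proof -
  show "S \<noteq> UNIV" using assms by auto
  have "finite (UNIV - S)" using assms(1) by (simp add: numerical_semigroup_def)
  hence "x \<le> Max (UNIV - S)" using assms(2) by (intro Max_ge) auto
  moreover have "S \<noteq> UNIV" using assms by auto
  ultimately show "int x \<le> frobenius S" by (simp add: frobenius_def)
qed

lemma frob_gap:
  assumes "numerical_semigroup S" "S \<noteq> UNIV"
  shows "nat (frobenius S) \<notin> S" "frobenius S = int (nat (frobenius S))"
proof -
  have "finite (UNIV - S)" using assms(1) by (simp add: numerical_semigroup_def)
  hence "Max (UNIV - S) \<in> UNIV - S" using assms(2) by (intro Max_in) auto
  thus "nat (frobenius S) \<notin> S" "frobenius S = int (nat (frobenius S))"
    using assms by (auto simp: frobenius_def)
qed

theorem proposition25:
  fixes I S :: "nat set"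
  assumes "numerical_semigroup I" and "numerical_semigroup S"
    and "irreducible_ns I" and "S \<subseteq> I" and "frobenius S = frobenius I"
  shows "(\<exists>A. A \<subseteq> {x \<in> I. frobenius I < 2 * int x \<and> int x < frobenius I} \<and> S = I - A)
         \<longleftrightarrow> Delta S = Delta I"
proof
  assume "\<exists>A. A \<subseteq> {x \<in> I. frobenius I < 2 * int x \<and> int x < frobenius I} \<and> S = I - A"
  then obtain A where A: "A \<subseteq> {x \<in> I. frobenius I < 2 * int x \<and> int x < frobenius I}" "S = I - A"
    by blast
  show "Delta S = Delta I" using A assms(5) unfolding Delta_def by force
next
  assume D: "Delta S = Delta I"
  define A where "A = I - S"
  have "A \<subseteq> {x \<in> I. frobenius I < 2 * int x \<and> int x < frobenius I}"
  proof
    fix x assume xA: "x \<in> A"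
    hence xI: "x \<in> I" and xS: "x \<notin> S" by (auto simp: A_def)
    have SU: "S \<noteq> UNIV" and le: "int x \<le> frobenius I"
      using gap_le[OF assms(2) xS] assms(5) by auto
    have IU: "I \<noteq> UNIV"
    proof
      assume "I = UNIV"
      hence "frobenius I = -1" by (simp add: frobenius_def)
      thus False using le by simp
    qed
    note fg = frob_gap[OF assms(1) IU]
    have lt: "int x < frobenius I"
    proof -
      have "x \<noteq> nat (frobenius I)" using fg(1) xI by auto
      thus ?thesis using le fg(2) by linarith
    qed
    have "\<not> 2 * int x < frobenius I"
    proof
      assume "2 * int x < frobenius I"
      hence "x \<in> Delta I" using xI by (simp add: Delta_def)
      hence "x \<in> Delta S" using D by simp
      hence "x \<in> S" by (simp add: Delta_def)
      thus False using xS by simp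
    qed
    moreover have "2 * int x \<noteq> frobenius I"
    proof
      assume "2 * int x = frobenius I"
      hence "x + x = nat (frobenius I)" by linarith
      moreover have "x + x \<in> I" using xI assms(1) by (simp add: numerical_semigroup_def)
      ultimately show False using fg(1) by simp
    qed
    ultimately show "x \<in> {x \<in> I. frobenius I < 2 * int x \<and> int x < frobenius I}"
      using xI lt by auto
  qed
  moreover have "S = I - A" using assms(4) by (auto simp: A_def)
  ultimately show "\<exists>A. A \<subseteq> {x \<in> I. frobenius I < 2 * int x \<and> int x < frobenius I} \<and> S = I - A"
    by blast
qed

end
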